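(* Let $a,b>0$ be constants. Let $G=(V,E)$ be a graph with $n$ vertices, $m\ge1$ edges, degeneracy $d$, clique number $\omega$ and clique distance $\sigma$, and let $(\mathcal{C},\mathcal{L})$ be a DCC representation of $G$ with $\mathcal{C}=\{C_\ell\}_{\ell\in I}$ composition-minimal, $\|\mathcal{C}\|\le a\,m$ and $|\mathcal{C}|\le b\,\sigma$. Then there is a constant $c$ depending only on $a,b$ such that $$\frac{1}{\binom{n}{2}}\sum_{\{u,v\}\subseteq V,\,u\ne v}\min\{|L_u|,|L_v|\}\le c\,\min\{\sigma,d\}\quad\text{and}\quad \frac1n\sum_{v\in V}\sum_{\ell\in L_v}|C_\ell|\le c\,\omega\,\min\{\sigma,d\}.$$
   Context: All graphs are finite, simple, undirected, with no isolated vertices; $n=|V|$, $m=|E|$. A non-edge is an unordered pair of distinct non-adjacent vertices. A clique is a vertex set inducing a complete subgraph; $\omega$ is the maximum clique size. Clique distance $\sigma:=\binom{n}{2}-m+1$. Degeneracy $d:=\max_{H}\delta_H$ over all subgraphs $H$ of $G$, where $\delta_H$ is the minimum degree of $H$. $\|\mathcal{F}\|:=\sum_{F\in\mathcal{F}}|F|$. A clique cover is an indexed family $\{C_\ell\}_{\ell\in I}$ of cliques of $G$ covering every edge; composition-minimal means that for all distinct indices $i\ne j$ there are $u\in C_i$, $v\in C_j$ with $\{u,v\}$ a non-edge. A DCC representation is a pair $(\mathcal{C},\mathcal{L})$ with $\mathcal{C}$ a clique cover and $\mathcal{L}=\{L_v\}_{v\in V}$, $L_v=\{\ell\in I: v\in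 C_\ell\}$. *)

theory Defs
  imports Complex_Main
begin

definition simple_graph :: "nat set \<Rightarrow> nat set set \<Rightarrow> bool" where
  "simple_graph V E \<longleftrightarrow> finite V \<and> (\<forall>e\<in>E. e \<subseteq> V \<and> card e = 2)
     \<and> (\<forall>v\<in>V. \<exists>e\<in>E. v \<in> e)"

definition is_nonedge :: "nat set \<Rightarrow> nat set set \<Rightarrow> nat \<Rightarrow> nat \<Rightarrow> bool" where
  "is_nonedge V E u v \<longleftrightarrow> u \<in> V \<and> v \<in> V \<and> u \<noteq> v \<and> {u, v} \<notin> E"

definition is_clique :: "nat set \<Rightarrow> nat set set \<Rightarrow> nat set \<Rightarrow> bool" where
  "is_clique V E K \<longleftrightarrow> K \<subseteq> V \<and> (\<forall>u\<in>K. \<forall>v\<in>K. u \<noteq> v \<longrightarrow> {u, v} \<in> E)"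

definition clique_number :: "nat set \<Rightarrow> nat set set \<Rightarrow> nat" where
  "clique_number V E = Max {card K | K. is_clique V E K}"

definition clique_distance :: "nat set \<Rightarrow> nat set set \<Rightarrow> nat" where
  "clique_distance V E = (card V choose 2) - card E + 1"

definition is_subgraph :: "nat set \<Rightarrow> nat set set \<Rightarrow> nat set \<Rightarrow> nat set set \<Rightarrow> bool" where
  "is_subgraph V E W F \<longleftrightarrow> W \<subseteq> V \<and> W \<noteq> {} \<and> F \<subseteq> E \<and> (\<forall>e\<in>F. e \<subseteq> W)"

definition min_degree :: "nat set \<Rightarrow> nat set set \<Rightarrow> nat" where
  "min_degree W F = Min ((\<lambda>v. card {e\<in>F. v \<in> e}) ` W)"

definition degeneracy :: "nat set \<Rightarrow> nat set set \<Rightarrow> nat" where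
  "degeneracy V E = Max {min_degree W F | W F. is_subgraph V E W F}"

definition clique_cover :: "nat set \<Rightarrow> nat set set \<Rightarrow> nat set \<Rightarrow> (nat \<Rightarrow> nat set) \<Rightarrow> bool" where
  "clique_cover V E I C \<longleftrightarrow> finite I \<and> (\<forall>l\<in>I. is_clique V E (C l))
     \<and> (\<forall>e\<in>E. \<exists>l\<in>I. e \<subseteq> C l)"

definition composition_minimal :: "nat set \<Rightarrow> nat set set \<Rightarrow> nat set \<Rightarrow> (nat \<Rightarrow> nat set) \<Rightarrow> bool" where
  "composition_minimal V E I C \<longleftrightarrow>
     (\<forall>i\<in>I. \<forall>j\<in>I. i \<noteq> j \<longrightarrow> (\<exists>u\<in>C i. \<exists>v\<in>C j. is_nonedge V E u v))"

definition Llist :: "nat set \<Rightarrow> (nat \<Rightarrow> nat set) \<Rightarrow> nat \<Rightarrow> nat set" where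
  "Llist I C v = {l\<in>I. v \<in> C l}"

definition cover_size :: "nat set \<Rightarrow> (nat \<Rightarrow> nat set) \<Rightarrow> nat" where
  "cover_size I C = (\<Sum>l\<in>I. card (C l))"

end

theory Submission
  imports Defs
begin

lemma swap_lemma:
  fixes g :: "'b \<Rightarrow> real"
  assumes "finite A" "finite B"
  shows "(\<Sum>v\<in>A. \<Sum>l\<in>{l\<in>B. R v l}. g l) = (\<Sum>l\<in>B. g l * real (card {v\<in>A. R v l}))"
proof -
  have "(\<Sum>v\<in>A. \<Sum>l\<in>{l\<in>B. R v l}. g l) = (\<Sum>v\<in>A. \<Sum>l\<in>B. if R v l then g l else 0)"
    using assms by (simp add: sum.inter_filter)
  also have "\<dots> = (\<Sum>l\<in>B. \<Sum>v\<in>A. if R v l then g l else 0)" by (rule sum.swap)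
  also have "\<dots> = (\<Sum>l\<in>B. g l * real (card {v\<in>A. R v l}))"
    using assms(1) by (intro sum.cong refl) (simp add: sum.inter_filter[symmetric] mult.commute)
  finally show ?thesis .
qed

lemma deg_bound:
  assumes sg: "simple_graph V E"
  shows "real (card E) \<le> real (card V) * real (degeneracy V E)"
proof -
  have fV: "finite V" and eV: "\<And>e. e\<in>E \<Longrightarrow> e \<subseteq> V \<and> card e = 2"
    using sg by (auto simp: simple_graph_def)
  have "E \<subseteq> Pow V" using eV by auto
  then have fE: "finite E" using fV by (meson finite_Pow_iff finite_subset)
  define EW where "EW W = {e\<in>E. e \<subseteq> W}" for W
  define rat where "rat W = real (card (EW W)) / real (card W)" for W
  define Ws where "Ws = {W. W \<subseteq> V \<and> W \<noteq> {}}"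
  have fWs: "finite Ws" using fV unfolding Ws_def by simp
  show ?thesis
  proof (cases "V = {}")
    case True
    then have "E = {}" using eV by fastforce
    then show ?thesis by simp
  next
    case False
    then have VWs: "V \<in> Ws" unfolding Ws_def by simp
    define r where "r = Max (rat ` Ws)"
    have rge: "\<And>W. W \<in> Ws \<Longrightarrow> rat W \<le> r" unfolding r_def using fWs by simp
    have "r \<in> rat ` Ws" unfolding r_def using fWs VWs by (intro Max_in) auto
    then obtain W where W: "W \<in> Ws" "rat W = r" by auto
    have WV: "W \<subseteq> V" "W \<noteq> {}" using W unfolding Ws_def by auto
    have fW: "finite W" using WV fV finite_subset by blast
    have cW: "card W > 0" using fW WV by (simp add: card_gt_0_iff)
    have EV: "EW V = E" using eV unfolding EW_def by auto
    have r1: "real (card E) / real (card V) \<le> r" using rge[OF VWs] EV unfolding rat_def by simp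
    have rW: "real (card (EW W)) = r * real (card W)" using W(2) cW unfolding rat_def by (auto simp: field_simps)
    have r0: "r \<ge> 0" using W(2) unfolding rat_def by (metis divide_nonneg_nonneg of_nat_0_le_iff)
    have degv: "r \<le> real (card {e\<in>EW W. v \<in> e})" if v: "v \<in> W" for v
    proof (cases "W = {v}")
      case True
      have "EW W = {}"
      proof -
        { fix e assume "e \<in> E" "e \<subseteq> {v}"
          then have "card e \<le> 1" using card_mono[of "{v}" e] by simp
          with eV[OF \<open>e\<in>E\<close>] have False by simp }
        then show ?thesis unfolding EW_def using True by auto
      qed
      then have "r = 0" using rW cW True by simp
      then show ?thesis by simp
    next
      case False
      define W' where "W' = W - {v}"
      have W'Ws: "W' \<in> Ws" using False v WV unfolding W'_def Ws_def by auto
      have eq: "EW W' = EW W - {e\<in>EW W. v \<in> e}" unfolding EW_def W'_def by auto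
      have fEW: "finite (EW W)" using fE unfolding EW_def by simp
      have ce: "card (EW W') = card (EW W) - card {e\<in>EW W. v \<in> e}"
        using eq fEW by (simp add: card_Diff_subset)
      have le: "card {e\<in>EW W. v \<in> e} \<le> card (EW W)" using fEW by (simp add: card_mono)
      have cW': "card W' = card W - 1" using v fW unfolding W'_def by simp
      have cW'p: "card W' > 0" using W'Ws fW unfolding Ws_def W'_def
        by (simp add: card_gt_0_iff)
      have "rat W' \<le> r" using rge[OF W'Ws] .
      then have "real (card (EW W')) \<le> r * real (card W')" using cW'p unfolding rat_def
        by (simp add: divide_le_eq)
      then have "real (card (EW W)) - real (card {e\<in>EW W. v \<in> e}) \<le> r * (real (card W) - 1)"
        using ce le cW' cW'p by (simp add: of_nat_diff)
      then show ?thesis using rW by (simp add: algebra_simps)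
    qed
    have subg: "is_subgraph V E W (EW W)" using WV unfolding is_subgraph_def EW_def by auto
    have md: "r \<le> real (min_degree W (EW W))"
    proof -
      have "(\<lambda>v. card {e\<in>EW W. v \<in> e}) ` W \<noteq> {}" using WV by simp
      moreover have "finite ((\<lambda>v. card {e\<in>EW W. v \<in> e}) ` W)" using fW by simp
      ultimately have "min_degree W (EW W) \<in> (\<lambda>v. card {e\<in>EW W. v \<in> e}) ` W"
        unfolding min_degree_def by (rule Min_in[rotated])
      then obtain v where "v \<in> W" "min_degree W (EW W) = card {e\<in>EW W. v \<in> e}"
        by (rule imageE) simp
      then show ?thesis using degv by simp
    qed
    have fS: "finite {min_degree W F | W F. is_subgraph V E W F}"
    proof -
      have "{min_degree W F | W F. is_subgraph V E W F} \<subseteq> (\<lambda>(W,F). min_degree W F) ` (Pow V \<times> Pow E)"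
      proof (rule subsetI)
        fix x assume "x \<in> {min_degree W F | W F. is_subgraph V E W F}"
        then obtain W F where x: "x = min_degree W F" "is_subgraph V E W F" by blast
        then have "(W, F) \<in> Pow V \<times> Pow E" unfolding is_subgraph_def by blast
        then show "x \<in> (\<lambda>(W,F). min_degree W F) ` (Pow V \<times> Pow E)"
          using x(1) by (intro image_eqI[of _ _ "(W,F)"]) auto
      qed
      then show ?thesis using fV fE finite_subset by blast
    qed
    have "min_degree W (EW W) \<le> degeneracy V E"
      unfolding degeneracy_def using subg fS by (intro Max_ge) auto
    then have "r \<le> real (degeneracy V E)" using md by linarith
    then have "real (card E) / real (card V) \<le> real (degeneracy V E)" using r1 by linarith
    moreover have "real (card V) > 0" using False fV by (simp add: card_gt_0_iff)
    ultimately have "real (card E) \<le> real (degeneracy V E) * real (card V)"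
      by (simp add: pos_divide_le_eq)
    then show ?thesis by (metis mult.commute)
  qed
qed

lemma two_choose: "2 * (n choose 2) = n * (n - 1)"
proof (induction n)
  case 0 then show ?case by simp
next
  case (Suc n)
  have "Suc n choose 2 = n + (n choose 2)" by (simp add: numeral_2_eq_2)
  then show ?case using Suc by (cases n) (auto simp: algebra_simps)
qed

lemma card_pairs_with:
  assumes "finite V"
  shows "card {P \<in> {P. P \<subseteq> V \<and> card P = 2}. x \<in> P} \<le> card V - 1"
proof (cases "x \<in> V")
  case False
  then have "{P \<in> {P. P \<subseteq> V \<and> card P = 2}. x \<in> P} = {}" by blast
  then show ?thesis by (metis card.empty zero_le)
next
  case True
  have "{P \<in> {P. P \<subseteq> V \<and> card P = 2}. x \<in> P} \<subseteq> (\<lambda>y. {x, y}) ` (V - {x})"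
  proof
    fix P assume P: "P \<in> {P \<in> {P. P \<subseteq> V \<and> card P = 2}. x \<in> P}"
    then obtain u v where uv: "P = {u, v}" "u \<noteq> v" by (auto simp: card_2_iff)
    show "P \<in> (\<lambda>y. {x, y}) ` (V - {x})"
    proof (cases "x = u")
      case True
      then show ?thesis using P uv by (intro image_eqI[of _ _ v]) auto
    next
      case False
      then have "x = v" using P uv by auto
      then show ?thesis using P uv by (intro image_eqI[of _ _ u]) auto
    qed
  qed
  then have "card {P \<in> {P. P \<subseteq> V \<and> card P = 2}. x \<in> P} \<le> card ((\<lambda>y. {x, y}) ` (V - {x}))"
    using assms by (intro card_mono) auto
  also have "\<dots> \<le> card (V - {x})" by (rule card_image_le) (use assms in auto)
  also have "\<dots> = card V - 1" using True assms by simp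
  finally show ?thesis .
qed

theorem mainTheorem7:
  fixes a b :: real
  assumes "a > 0" and "b > 0"
  shows "\<exists>c::real. \<forall>V E I C.
    simple_graph V E \<and> card E \<ge> 1 \<and> clique_cover V E I C \<and> composition_minimal V E I C
    \<and> real (cover_size I C) \<le> a * real (card E)
    \<and> real (card I) \<le> b * real (clique_distance V E)
    \<longrightarrow>
    (1 / real (card V choose 2)) * (\<Sum>P\<in>{P. P \<subseteq> V \<and> card P = 2}. real (Min ((\<lambda>x. card (Llist I C x)) ` P)))
        \<le> c * real (min (clique_distance V E) (degeneracy V E))
    \<and> (1 / real (card V)) * (\<Sum>v\<in>V. \<Sum>l\<in>Llist I C v. real (card (C l)))
        \<le> c * real (clique_number V E) * real (min (clique_distance V E) (degeneracy V E))"
proof (rule exI[of _ "2 * a + b"], intro allI impI)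
  fix V E I C
  assume H: "simple_graph V E \<and> card E \<ge> 1 \<and> clique_cover V E I C \<and> composition_minimal V E I C
    \<and> real (cover_size I C) \<le> a * real (card E)
    \<and> real (card I) \<le> b * real (clique_distance V E)"
  define c where "c = 2 * a + b"
  have sg: "simple_graph V E" and m1: "card E \<ge> 1" and cc: "clique_cover V E I C"
    and cs: "real (cover_size I C) \<le> a * real (card E)"
    and ci: "real (card I) \<le> b * real (clique_distance V E)" using H by auto
  have fV: "finite V" and eV: "\<And>e. e\<in>E \<Longrightarrow> e \<subseteq> V \<and> card e = 2"
    using sg by (auto simp: simple_graph_def)
  have fI: "finite I" and CV: "\<And>l. l \<in> I \<Longrightarrow> C l \<subseteq> V"
    and Ccl: "\<And>l. l \<in> I \<Longrightarrow> is_clique V E (C l)"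
    using cc by (auto simp: clique_cover_def is_clique_def)
  have CV': "\<And>l. l \<in> I \<Longrightarrow> {v\<in>V. v \<in> C l} = C l" using CV by auto
  define n where "n = card V"
  define \<sigma> where "\<sigma> = clique_distance V E"
  define d where "d = degeneracy V E"
  define \<omega> where "\<omega> = clique_number V E"
  define m where "m = card E"
  define f where "f x = card (Llist I C x)" for x
  define Ps where "Ps = {P. P \<subseteq> V \<and> card P = 2}"
  have "E \<noteq> {}" using m1 by auto
  then obtain e where "e \<in> E" by auto
  then have n2: "n \<ge> 2" using eV[of e] fV card_mono unfolding n_def by metis
  have dg: "real m \<le> real n * real d" using deg_bound[OF sg] unfolding m_def n_def d_def .
  have cs': "real (cover_size I C) \<le> a * (real n * real d)"
    using cs dg assms(1) unfolding m_def by (smt (verit) mult_left_mono)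
  have a0: "a \<le> c" "b \<le> c" "2 * a \<le> c" using assms unfolding c_def by auto
  have c0: "c \<ge> 0" using a0 assms by linarith
  have sumf: "(\<Sum>x\<in>V. real (f x)) = real (cover_size I C)"
  proof -
    have "(\<Sum>v\<in>V. \<Sum>l\<in>{l\<in>I. v \<in> C l}. (1::real)) = (\<Sum>l\<in>I. 1 * real (card {v\<in>V. v \<in> C l}))"
      by (rule swap_lemma[OF fV fI])
    also have "\<dots> = (\<Sum>l\<in>I. real (card (C l)))"
      using CV' by (intro sum.cong refl) simp
    finally show ?thesis unfolding f_def Llist_def cover_size_def by simp
  qed
  have fle: "f x \<le> card I" for x unfolding f_def Llist_def using fI by (intro card_mono) auto
  have cPs: "card Ps = n choose 2" unfolding Ps_def n_def using n_subsets[OF fV] by simp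
  have fPs: "finite Ps" unfolding Ps_def using fV by simp
  have Cpos: "real (n choose 2) > 0" using n2 by simp
  have C2: "2 * real (n choose 2) = real n * (real n - 1)"
  proof -
    have "real (2 * (n choose 2)) = real (n * (n - 1))" by (simp only: two_choose)
    then show ?thesis using n2 by (simp add: of_nat_diff)
  qed
  define S where "S = (\<Sum>P\<in>Ps. real (Min (f ` P)))"
  have minle: "real (Min (f ` P)) \<le> (\<Sum>x\<in>{x\<in>V. x \<in> P}. real (f x))" "Min (f ` P) \<le> card I"
    if P: "P \<in> Ps" for P
  proof -
    have PV: "P \<subseteq> V" and fP: "finite P" and ne: "P \<noteq> {}" using P fV unfolding Ps_def
      by (auto intro: finite_subset)
    obtain x where x: "x \<in> P" using ne by auto
    have "Min (f ` P) \<le> f x" using fP x by simp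
    also have "real (f x) \<le> (\<Sum>x\<in>P. real (f x))" using fP x by (intro member_le_sum) auto
    moreover have "{x\<in>V. x \<in> P} = P" using PV by auto
    ultimately show "real (Min (f ` P)) \<le> (\<Sum>x\<in>{x\<in>V. x \<in> P}. real (f x))"
      by simp
    show "Min (f ` P) \<le> card I" using \<open>Min (f ` P) \<le> f x\<close> fle[of x] by linarith
  qed
  have S1: "S \<le> real (n choose 2) * (b * real \<sigma>)"
  proof -
    have "S \<le> (\<Sum>P\<in>Ps. real (card I))" unfolding S_def using minle(2) by (intro sum_mono) auto
    also have "\<dots> = real (n choose 2) * real (card I)" using cPs by simp
    also have "\<dots> \<le> real (n choose 2) * (b * real \<sigma>)" using ci unfolding \<sigma>_def
      by (intro mult_left_mono) auto
    finally show ?thesis .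
  qed
  have S2: "S \<le> real (n choose 2) * (2 * a * real d)"
  proof -
    have "S \<le> (\<Sum>P\<in>Ps. \<Sum>x\<in>{x\<in>V. x \<in> P}. real (f x))" unfolding S_def using minle(1)
      by (intro sum_mono) auto
    also have "\<dots> = (\<Sum>x\<in>V. real (f x) * real (card {P\<in>Ps. x \<in> P}))"
      by (rule swap_lemma[OF fPs fV])
    also have "\<dots> \<le> (\<Sum>x\<in>V. real (f x) * (real n - 1))"
    proof (intro sum_mono mult_left_mono)
      fix x assume "x \<in> V"
      have "card {P\<in>Ps. x \<in> P} \<le> n - 1" using card_pairs_with[OF fV, of x] unfolding Ps_def n_def .
      then show "real (card {P\<in>Ps. x \<in> P}) \<le> real n - 1" using n2 by (simp add: of_nat_diff)
    qed auto
    also have "\<dots> = real (cover_size I C) * (real n - 1)" using sumf by (simp only: sum_distrib_right[symmetric])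
    also have "\<dots> \<le> a * (real n * real d) * (real n - 1)" using cs' n2 by (intro mult_right_mono) auto
    also have "\<dots> = a * real d * (real n * (real n - 1))" by (simp add: algebra_simps)
    also have "\<dots> = a * real d * (2 * real (n choose 2))" by (simp only: C2)
    also have "\<dots> = real (n choose 2) * (2 * a * real d)" by (simp add: algebra_simps)
    finally show ?thesis .
  qed
  have part1: "(1 / real (n choose 2)) * S \<le> c * real (min \<sigma> d)"
  proof -
    have "real (n choose 2) * (b * real \<sigma>) \<le> real (n choose 2) * (c * real \<sigma>)"
      using a0 by (intro mult_left_mono mult_right_mono) auto
    then have "S \<le> real (n choose 2) * (c * real \<sigma>)" using S1 by linarith
    moreover have "real (n choose 2) * (2 * a * real d) \<le> real (n choose 2) * (c * real d)"
      using a0 by (intro mult_left_mono mult_right_mono) auto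
    then have "S \<le> real (n choose 2) * (c * real d)" using S2 by linarith
    ultimately have "S \<le> real (n choose 2) * (c * real (min \<sigma> d))"
      by (cases "\<sigma> \<le> d") (auto simp: min_def)
    then show ?thesis using Cpos by (simp add: field_simps)
  qed
  have fin_cl: "finite {card K | K. is_clique V E K}"
  proof -
    have "{card K | K. is_clique V E K} \<subseteq> card ` Pow V" unfolding is_clique_def by auto
    then show ?thesis using fV finite_subset by blast
  qed
  have Cw: "card (C l) \<le> \<omega>" if "l \<in> I" for l
    unfolding \<omega>_def clique_number_def using Ccl[OF that] fin_cl by (intro Max_ge) auto
  have Cn: "card (C l) \<le> n" if "l \<in> I" for l
    unfolding n_def using CV[OF that] fV by (intro card_mono) auto
  define T where "T = (\<Sum>v\<in>V. \<Sum>l\<in>Llist I C v. real (card (C l)))"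
  have T: "T = (\<Sum>l\<in>I. real (card (C l)) * real (card (C l)))"
  proof -
    have "T = (\<Sum>l\<in>I. real (card (C l)) * real (card {v\<in>V. v \<in> C l}))"
      unfolding T_def Llist_def by (rule swap_lemma[OF fV fI])
    also have "\<dots> = (\<Sum>l\<in>I. real (card (C l)) * real (card (C l)))"
      using CV' by (intro sum.cong refl) simp
    finally show ?thesis .
  qed
  have T1: "T \<le> real n * real \<omega> * (c * real d)"
  proof -
    have "T \<le> (\<Sum>l\<in>I. real \<omega> * real (card (C l)))" unfolding T
      using Cw by (intro sum_mono mult_right_mono) auto
    also have "\<dots> = real \<omega> * real (cover_size I C)"
      unfolding cover_size_def by (simp add: sum_distrib_left)
    also have "\<dots> \<le> real \<omega> * (a * (real n * real d))" using cs' by (intro mult_left_mono) auto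
    also have "\<dots> \<le> real \<omega> * (c * (real n * real d))" using a0 by (intro mult_left_mono mult_right_mono) auto
    finally show ?thesis by (simp add: algebra_simps)
  qed
  have T2: "T \<le> real n * real \<omega> * (c * real \<sigma>)"
  proof -
    have "T \<le> (\<Sum>l\<in>I. real \<omega> * real n)" unfolding T
      using Cw Cn by (intro sum_mono mult_mono) auto
    also have "\<dots> = real (card I) * (real \<omega> * real n)" by simp
    also have "\<dots> \<le> (b * real \<sigma>) * (real \<omega> * real n)" using ci unfolding \<sigma>_def by (intro mult_right_mono) auto
    also have "\<dots> \<le> (c * real \<sigma>) * (real \<omega> * real n)" using a0 by (intro mult_right_mono) auto
    finally show ?thesis by (simp add: algebra_simps)
  qed
  have part2: "(1 / real n) * T \<le> c * real \<omega> * real (min \<sigma> d)"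
  proof -
    have "T \<le> real n * real \<omega> * (c * real (min \<sigma> d))"
      using T1 T2 by (cases "\<sigma> \<le> d") (auto simp: min_def)
    then show ?thesis using n2 by (simp add: field_simps)
  qed
  show "(1 / real (card V choose 2)) * (\<Sum>P\<in>{P. P \<subseteq> V \<and> card P = 2}. real (Min ((\<lambda>x. card (Llist I C x)) ` P)))
        \<le> (2 * a + b) * real (min (clique_distance V E) (degeneracy V E))
    \<and> (1 / real (card V)) * (\<Sum>v\<in>V. \<Sum>l\<in>Llist I C v. real (card (C l)))
        \<le> (2 * a + b) * real (clique_number V E) * real (min (clique_distance V E) (degeneracy V E))"
    using part1 part2 unfolding S_def T_def Ps_def f_def c_def n_def \<sigma>_def d_def \<omega>_def by simp
qed

end
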